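(* Let $a>b>0$ and consider the ellipse $E:\ \frac{x^2}{a^2}+\frac{y^2}{b^2}=1$. For a point $A$ of the plane let $n(A)$ denote the number of points $B\in E$ such that $A$ lies on the normal line to $E$ at $B$. Put $$x_0=\sqrt{\frac{a^4(a^2-2b^2)^3}{(a^2-b^2)(a^2+b^2)^3}},\qquad y_0=\sqrt{\frac{b^4(2a^2-b^2)^3}{(a^2-b^2)(a^2+b^2)^3}}.$$ Then: (1) If $a^2>2b^2$, the four points $(\pm x_0,\pm y_0)$ (all sign combinations) lie on $E$ and divide $E$ into four arcs such that $n(A)=4$ for the points $A$ of some of these arcs and $n(A)=2$ for the points $A$ of the others. (2) If $a^2\le 2b^2$, then $n(A)=2$ for every point $A\in E$.
   Context: For $A\in E$ the point $B=A$ itself is counted in $n(A)$. The points $(\pm x_0,\pm y_0)$ are the intersection points of $E$ with the astroid $\sqrt[3]{a^2X^2}+\sqrt[3]{b^2Y^2}=\sqrt[3]{(a^2-b^2)^2}$ (the evolute of $E$). *)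

theory Defs
  imports "HOL-Analysis.Analysis"
begin

definition ellipse :: "real \<Rightarrow> real \<Rightarrow> (real \<times> real) set" where
  "ellipse a b = {(x, y). x\<^sup>2 / a\<^sup>2 + y\<^sup>2 / b\<^sup>2 = 1}"

text \<open>Normal line to the ellipse at B: the line through B in the direction of the
  gradient (x/a^2, y/b^2) of the defining function at B.\<close>
definition normal_line :: "real \<Rightarrow> real \<Rightarrow> real \<times> real \<Rightarrow> (real \<times> real) set" where
  "normal_line a b B = {B + t *\<^sub>R (fst B / a\<^sup>2, snd B / b\<^sup>2) | t. True}"

text \<open>n(A): number of points B on the ellipse whose normal line passes through A
  (B = A itself is counted when A is on the ellipse).\<close>
definition num_normals :: "real \<Rightarrow> real \<Rightarrow> real \<times> real \<Rightarrow> nat" where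
  "num_normals a b A = card {B \<in> ellipse a b. A \<in> normal_line a b B}"

end

theory Submission
  imports Defs "HOL-Analysis.Analysis"
begin

lemma cubic_pos_large:
  fixes b c d M :: real
  assumes M: "M = 1 + \<bar>b\<bar> + \<bar>c\<bar> + \<bar>d\<bar>"
  shows "M^3 + b*M^2 + c*M + d > 0" and "(-M)^3 + b*(-M)^2 + c*(-M) + d < 0"
proof -
  have M1: "M \<ge> 1" using M by simp
  have a1: "\<bar>b*M^2\<bar> = \<bar>b\<bar>*M^2" by (simp add: abs_mult)
  have a2: "\<bar>c*M\<bar> = \<bar>c\<bar>*M" using M1 by (simp add: abs_mult)
  have h1: "-(b*M^2) \<le> \<bar>b\<bar>*M^2" "b*M^2 \<le> \<bar>b\<bar>*M^2"
    using abs_ge_minus_self[of "b*M^2"] abs_ge_self[of "b*M^2"] a1 by linarith+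
  have h2': "-(c*M) \<le> \<bar>c\<bar>*M" "c*M \<le> \<bar>c\<bar>*M"
    using abs_ge_minus_self[of "c*M"] abs_ge_self[of "c*M"] a2 by linarith+
  have h2: "\<bar>c\<bar>*M \<le> \<bar>c\<bar>*M^2" using M1 by (simp add: mult_left_mono power2_eq_square)
  have h3: "\<bar>d\<bar> \<le> \<bar>d\<bar>*M^2" using M1
    by (metis abs_ge_zero mult.right_neutral mult_left_mono one_le_power)
  have h4: "-d \<le> \<bar>d\<bar>" "d \<le> \<bar>d\<bar>" by linarith+
  have e: "M^3 = M^2 + \<bar>b\<bar>*M^2 + \<bar>c\<bar>*M^2 + \<bar>d\<bar>*M^2" using M by (simp add: power3_eq_cube power2_eq_square algebra_simps)
  have "M^2 > 0" using M1 by simp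
  show "M^3 + b*M^2 + c*M + d > 0" using h1 h2 h2' h3 h4 e \<open>M^2>0\<close> by linarith
  have e2: "(-M)^3 = -(M^3)" "(-M)^2 = M^2" "c*(-M) = -(c*M)" by simp_all
  show "(-M)^3 + b*(-M)^2 + c*(-M) + d < 0" unfolding e2 using h1 h2 h2' h3 h4 e \<open>M^2>0\<close> by linarith
qed

lemma cubic_root_exists:
  fixes al b c d :: real assumes "al > 0"
  shows "\<exists>r. al*r^3 + b*r^2 + c*r + d = 0"
proof -
  define M where "M = 1 + \<bar>b/al\<bar> + \<bar>c/al\<bar> + \<bar>d/al\<bar>"
  let ?g = "\<lambda>t::real. t^3 + (b/al)*t^2 + (c/al)*t + d/al"
  have "?g (-M) \<le> 0" "0 \<le> ?g M"
    using cubic_pos_large[OF M_def] by (simp_all only: less_imp_le)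
  moreover have "-M \<le> M" unfolding M_def by simp
  moreover have "continuous_on {-M..M} ?g" by (intro continuous_intros)
  ultimately obtain r where "?g r = 0" using IVT'[of ?g "-M" 0 M] by auto
  then have "al * ?g r = 0" by simp
  then show ?thesis using assms by (auto simp: algebra_simps)
qed

lemma quad_roots:
  fixes al e h t :: real assumes "al \<noteq> 0"
  shows "al*t^2 + e*t + h = 0 \<longleftrightarrow> (2*al*t + e)^2 = e^2 - 4*al*h"
proof -
  have "(2*al*t + e)^2 - (e^2 - 4*al*h) = 4*al*(al*t^2 + e*t + h)" by (simp add: algebra_simps power2_eq_square)
  then show ?thesis using assms by (metis diff_eq_diff_eq diff_self mult_eq_0_iff zero_neq_numeral)
qed

lemma cubic_count:
  fixes al b c d :: real assumes al: "al > 0" and r: "al*r^3 + b*r^2 + c*r + d = 0"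
  defines "D \<equiv> 18*al*b*c*d - 4*b^3*d + b^2*c^2 - 4*al*c^3 - 27*al^2*d^2"
  shows "D < 0 \<Longrightarrow> card {t. al*t^3+b*t^2+c*t+d = 0} = 1"
    and "D > 0 \<Longrightarrow> card {t. al*t^3+b*t^2+c*t+d = 0} = 3"
proof -
  define e where "e = b + al*r"
  define h where "h = c + e*r"
  have bb: "b = e - al*r" and cc: "c = h - e*r" unfolding e_def h_def by simp_all
  have dd: "d = -h*r" using r unfolding h_def e_def by (simp add: algebra_simps power2_eq_square power3_eq_cube)
  have fac: "al*t^3+b*t^2+c*t+d = (t - r)*(al*t^2 + e*t + h)" for t
    unfolding bb cc dd by (simp add: algebra_simps power2_eq_square power3_eq_cube)
  have Dis: "D = (e^2 - 4*al*h) * (al*r^2 + e*r + h)^2"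
    unfolding D_def bb cc dd by (simp add: algebra_simps power2_eq_square power3_eq_cube)
  have S: "{t. al*t^3+b*t^2+c*t+d = 0} = insert r {t. al*t^2 + e*t + h = 0}"
    using fac by auto
  {
    assume "D < 0"
    then have neg: "e^2 - 4*al*h < 0" unfolding Dis
      by (metis mult_nonneg_nonneg not_less zero_le_power2)
    have "{t. al*t^2 + e*t + h = 0} = {}"
      using quad_roots[of al] al neg by (auto, smt (verit) zero_le_power2)
    then show "card {t. al*t^3+b*t^2+c*t+d = 0} = 1" unfolding S by simp
  }
  {
    assume "D > 0"
    then have pos: "e^2 - 4*al*h > 0" unfolding Dis
      by (metis mult_nonpos_nonneg not_less zero_le_power2)
    have qr: "al*r^2 + e*r + h \<noteq> 0" using \<open>D > 0\<close> unfolding Dis by auto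
    define sq where "sq = sqrt (e^2 - 4*al*h)"
    have sq: "sq > 0" "sq^2 = e^2 - 4*al*h" unfolding sq_def using pos by simp_all
    define r1 where "r1 = (sq - e)/(2*al)"
    define r2 where "r2 = (-sq - e)/(2*al)"
    have r1: "2*al*r1 + e = sq" and r2: "2*al*r2 + e = -sq" unfolding r1_def r2_def using al by simp_all
    have Q: "{t. al*t^2 + e*t + h = 0} = {r1, r2}"
    proof (rule set_eqI)
      fix t
      have "al*t^2 + e*t + h = 0 \<longleftrightarrow> (2*al*t + e)^2 = sq^2" using quad_roots[of al t e h] al sq by simp
      also have "\<dots> \<longleftrightarrow> 2*al*t + e = sq \<or> 2*al*t + e = -sq" by (simp add: power2_eq_iff)
      also have "\<dots> \<longleftrightarrow> t = r1 \<or> t = r2" unfolding r1_def r2_def using al by (auto simp: field_simps)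
      finally show "t \<in> {t. al*t^2 + e*t + h = 0} \<longleftrightarrow> t \<in> {r1, r2}" by simp
    qed
    have "r1 \<noteq> r2" using r1 r2 sq by auto
    moreover have "r \<noteq> r1" "r \<noteq> r2" using qr Q by auto
    ultimately show "card {t. al*t^3+b*t^2+c*t+d = 0} = 3" unfolding S Q by simp
  }
qed

definition UU :: "real \<Rightarrow> real \<Rightarrow> real \<Rightarrow> real" where
  "UU P Q t = (P*(t^2-1) - 2*Q*t)/(t^2+1)"
definition VV :: "real \<Rightarrow> real \<Rightarrow> real \<Rightarrow> real" where
  "VV P Q t = (Q*(t^2-1) + 2*P*t)/(t^2+1)"

lemma den_pos: "(t::real)^2 + 1 > 0"
  using zero_le_power2[of t] by linarith

lemma frac_comb: "(x/d)*P + (y/d)*Q = (x*P + y*Q)/(d::real)"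
  by (simp add: add_divide_distrib)
lemma frac_comb2: "(x/d)*P - (y/d)*Q = (x*P - y*Q)/(d::real)"
  by (simp add: diff_divide_distrib)

lemma frac_comb3: "P*(x/d) - Q*(y/d) = (P*x - Q*y)/(d::real)"
  by (simp add: diff_divide_distrib)
lemma frac_comb4: "P*(x/d) + Q*(y/d) = (P*x + Q*y)/(d::real)"
  by (simp add: add_divide_distrib)

lemma UV_rot:
  fixes P Q t :: real
  assumes c: "P^2 + Q^2 = 1"
  shows "UU P Q t * P + VV P Q t * Q = (t^2-1)/(t^2+1)"
    and "VV P Q t * P - UU P Q t * Q = 2*t/(t^2+1)"
proof -
  have d: "t^2+1 \<noteq> 0" using den_pos[of t] by linarith
  have n1: "(P*(t^2-1) - 2*Q*t)*P + (Q*(t^2-1) + 2*P*t)*Q = (P^2+Q^2)*(t^2-1)"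
    by (simp add: algebra_simps power2_eq_square)
  have "UU P Q t * P + VV P Q t * Q = ((P*(t^2-1) - 2*Q*t)*P + (Q*(t^2-1) + 2*P*t)*Q)/(t^2+1)"
    unfolding UU_def VV_def frac_comb ..
  then have "UU P Q t * P + VV P Q t * Q = ((P^2+Q^2)*(t^2-1))/(t^2+1)" unfolding n1 .
  then show "UU P Q t * P + VV P Q t * Q = (t^2-1)/(t^2+1)" using c by simp
  have n2: "(Q*(t^2-1) + 2*P*t)*P - (P*(t^2-1) - 2*Q*t)*Q = (P^2+Q^2)*(2*t)"
    by (simp add: algebra_simps power2_eq_square)
  have "VV P Q t * P - UU P Q t * Q = ((Q*(t^2-1) + 2*P*t)*P - (P*(t^2-1) - 2*Q*t)*Q)/(t^2+1)"
    unfolding UU_def VV_def frac_comb2 ..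
  then have "VV P Q t * P - UU P Q t * Q = ((P^2+Q^2)*(2*t))/(t^2+1)" unfolding n2 .
  then show "VV P Q t * P - UU P Q t * Q = 2*t/(t^2+1)" using c by simp
qed

lemma UV_circle:
  fixes P Q t :: real
  assumes c: "P^2 + Q^2 = 1"
  shows "(UU P Q t)^2 + (VV P Q t)^2 = 1"
proof -
  have d: "t^2+1 \<noteq> 0" using den_pos[of t] by linarith
  have "(P*(t^2-1) - 2*Q*t)^2 + (Q*(t^2-1) + 2*P*t)^2 = (P^2+Q^2)*(t^2+1)^2"
    by (simp add: algebra_simps power2_eq_square)
  then have "(P*(t^2-1) - 2*Q*t)^2 + (Q*(t^2-1) + 2*P*t)^2 = (t^2+1)^2" using c by simp
  then show ?thesis unfolding UU_def VV_def using d by (simp add: power_divide field_simps)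
qed

lemma UV_neq:
  fixes P Q t :: real
  assumes c: "P^2 + Q^2 = 1"
  shows "(UU P Q t, VV P Q t) \<noteq> (P, Q)"
proof
  assume "(UU P Q t, VV P Q t) = (P, Q)"
  then have "UU P Q t * P + VV P Q t * Q = 1" using c by (simp add: power2_eq_square)
  then have "(t^2-1)/(t^2+1) = 1" using UV_rot[OF c] by simp
  then show False using den_pos[of t] by (simp add: field_simps)
qed

lemma UV_recover:
  fixes P Q t :: real
  assumes c: "P^2 + Q^2 = 1"
  shows "t = (VV P Q t * P - UU P Q t * Q) / (1 - (UU P Q t * P + VV P Q t * Q))"
proof -
  have d: "t^2+1 \<noteq> 0" using den_pos[of t] by linarith
  have "1 - (t^2-1)/(t^2+1) = 2/(t^2+1)" using d by (simp add: field_simps)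
  then show ?thesis unfolding UV_rot[OF c] using d by simp
qed

lemma UV_inj:
  fixes P Q :: real
  assumes c: "P^2 + Q^2 = 1"
  shows "inj (\<lambda>t. (UU P Q t, VV P Q t))"
  by (rule injI) (metis UV_recover[OF c] prod.inject)

lemma UV_surj:
  fixes P Q u v :: real
  assumes c: "P^2 + Q^2 = 1" and uv: "u^2 + v^2 = 1" and ne: "(u, v) \<noteq> (P, Q)"
  shows "\<exists>t. u = UU P Q t \<and> v = VV P Q t"
proof -
  define z1 where "z1 = u * P + v * Q"
  define z2 where "z2 = v * P - u * Q"
  have zz: "z1^2 + z2^2 = 1"
  proof -
    have "z1^2 + z2^2 = (u^2+v^2)*(P^2+Q^2)" unfolding z1_def z2_def by (simp add: algebra_simps power2_eq_square)
    then show ?thesis using c uv by simp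
  qed
  have uz: "u = P*z1 - Q*z2" and vz: "v = Q*z1 + P*z2"
  proof -
    have "P*z1 - Q*z2 = u * (P^2+Q^2)" unfolding z1_def z2_def by (simp add: algebra_simps power2_eq_square)
    then show "u = P*z1 - Q*z2" using c by simp
    have "Q*z1 + P*z2 = v * (P^2+Q^2)" unfolding z1_def z2_def by (simp add: algebra_simps power2_eq_square)
    then show "v = Q*z1 + P*z2" using c by simp
  qed
  have z1ne: "z1 \<noteq> 1"
  proof
    assume "z1 = 1"
    then have "z2 = 0" using zz by simp
    then show False using ne uz vz \<open>z1 = 1\<close> by simp
  qed
  define t where "t = z2 / (1 - z1)"
  have o: "1 - z1 \<noteq> 0" using z1ne by simp
  have z2sq: "z2^2 = (1-z1)*(1+z1)" using zz by (simp add: algebra_simps power2_eq_square)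
  have tsq: "t^2 = (1+z1)/(1-z1)"
  proof -
    have "t^2 = z2^2/(1-z1)^2" unfolding t_def by (simp add: power_divide)
    also have "\<dots> = ((1-z1)*(1+z1))/((1-z1)*(1-z1))" unfolding z2sq by (simp add: power2_eq_square)
    also have "\<dots> = (1+z1)/(1-z1)" by (rule mult_divide_mult_cancel_left[OF o])
    finally show ?thesis .
  qed
  have tden: "t^2 + 1 = 2/(1-z1)" unfolding tsq using o by (simp add: field_simps)
  have tm: "t^2 - 1 = 2*z1/(1-z1)" unfolding tsq using o by (simp add: field_simps)
  have c1: "(t^2-1)/(t^2+1) = z1" unfolding tden tm using o by (simp add: field_simps)
  have c2: "2*t/(t^2+1) = z2"
    unfolding tden unfolding t_def using o by (simp add: field_simps)
  have e1: "P*(t^2-1) - Q*(2*t) = P*(t^2-1) - 2*Q*t" "Q*(t^2-1) + P*(2*t) = Q*(t^2-1) + 2*P*t" by simp_all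
  have "UU P Q t = P*((t^2-1)/(t^2+1)) - Q*(2*t/(t^2+1))" unfolding UU_def frac_comb3 e1 ..
  moreover have "VV P Q t = Q*((t^2-1)/(t^2+1)) + P*(2*t/(t^2+1))" unfolding VV_def frac_comb4 e1 ..
  ultimately have "u = UU P Q t \<and> v = VV P Q t" using uz vz c1 c2 by simp
  then show ?thesis by blast
qed

lemma H_id2:
  fixes P Q A B t U V :: real assumes "P^2 + Q^2 = 1"
    and "U*(t^2+1) = P*(t^2-1) - 2*Q*t" and "V*(t^2+1) = Q*(t^2-1) + 2*P*t"
  shows "(t^2+1)^2*(A*P*V - B*Q*U - (A-B)*U*V)
    = 2*((B+(A-B)*Q^2)*t^3 + 3*(A-B)*P*Q*t^2 + (2*A-B-3*(A-B)*Q^2)*t + (-((A-B)*P*Q)))"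
  using assms by algebra

lemma div_eq_helper: "(a::real) \<noteq> 0 \<Longrightarrow> p = a*u \<Longrightarrow> u = p/a" by simp

lemma normal_iff:
  fixes a b x y p q :: real
  assumes a: "a>0" and b: "b>0" and e: "(x,y) \<in> ellipse a b"
  shows "(p,q) \<in> normal_line a b (x,y) \<longleftrightarrow> (p-x)*y*a^2 - (q-y)*x*b^2 = 0"
proof -
  have mem: "(p,q) \<in> normal_line a b (x,y) \<longleftrightarrow> (\<exists>t. p = x + t*(x/a^2) \<and> q = y + t*(y/b^2))"
    unfolding normal_line_def by auto
  show ?thesis
  proof
    assume "(p,q) \<in> normal_line a b (x,y)"
    then obtain t where t: "p = x + t*(x/a^2)" "q = y + t*(y/b^2)" using mem by blast
    show "(p-x)*y*a^2 - (q-y)*x*b^2 = 0" unfolding t using a b by simp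
  next
    assume h: "(p-x)*y*a^2 - (q-y)*x*b^2 = 0"
    show "(p,q) \<in> normal_line a b (x,y)"
    proof (cases "x = 0")
      case True
      have e1: "x^2/a^2 + y^2/b^2 = 1" using e unfolding ellipse_def by simp
      have "y \<noteq> 0"
      proof
        assume "y = 0" then have "x^2/a^2 + y^2/b^2 = 0" using True by simp
        then show False using e1 by simp
      qed
      then have p0: "p = 0" using h True a by simp
      define t where "t = (q-y)*b^2/y"
      have "p = x + t*(x/a^2) \<and> q = y + t*(y/b^2)" unfolding t_def using True p0 \<open>y \<noteq> 0\<close> b by simp
      then show ?thesis using mem by blast
    next
      case False
      define t where "t = (p-x)*a^2/x"
      have 1: "p = x + t*(x/a^2)" unfolding t_def using False a by simp
      have "(q-y)*x*b^2 = (p-x)*y*a^2" using h by simp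
      then have "q - y = (p-x)*y*a^2/(x*b^2)" using False b by (simp add: field_simps)
      then have 2: "q = y + t*(y/b^2)" unfolding t_def using False b by (simp add: field_simps)
      show ?thesis using mem 1 2 by blast
    qed
  qed
qed

lemma count_normals:
  fixes a b p q :: real
  assumes a: "a>0" and b: "b>0" and A: "(p,q) \<in> ellipse a b"
  defines "P \<equiv> p/a" and "Q \<equiv> q/b" and "k \<equiv> a^2-b^2"
  defines "R \<equiv> {t. (b^2+k*Q^2)*t^3 + (3*k*P*Q)*t^2 + (2*a^2-b^2-3*k*Q^2)*t + (-(k*P*Q)) = 0}"
  assumes cR: "card R > 0"
  shows "num_normals a b (p,q) = Suc (card R)"
proof -
  have circ: "P^2 + Q^2 = 1" using A unfolding ellipse_def P_def Q_def by (simp add: power_divide)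
  define phi where "phi t = (a * UU P Q t, b * VV P Q t)" for t
  have phiE: "phi t \<in> ellipse a b" for t
    unfolding phi_def ellipse_def using UV_circle[OF circ, of t] a b by (simp add: power_mult_distrib)
  have key: "(p,q) \<in> normal_line a b (phi t) \<longleftrightarrow> t \<in> R" for t
  proof -
    define U where "U = UU P Q t"
    define V where "V = VV P Q t"
    have d: "t^2+1 \<noteq> 0" using den_pos[of t] by linarith
    have hU: "U*(t^2+1) = P*(t^2-1) - 2*Q*t" unfolding U_def UU_def using d by simp
    have hV: "V*(t^2+1) = Q*(t^2-1) + 2*P*t" unfolding V_def VV_def using d by simp
    have pq: "p = a*P" "q = b*Q" unfolding P_def Q_def using a b by simp_all
    have "(p,q) \<in> normal_line a b (phi t) \<longleftrightarrow> (p - a*U)*(b*V)*a^2 - (q - b*V)*(a*U)*b^2 = 0"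
      using normal_iff[OF a b, of "a*U" "b*V" p q] phiE[of t] unfolding phi_def U_def V_def by simp
    also have "(p - a*U)*(b*V)*a^2 - (q - b*V)*(a*U)*b^2 = (a*b)*(a^2*P*V - b^2*Q*U - (a^2-b^2)*U*V)"
      unfolding pq by (simp add: algebra_simps power2_eq_square)
    also have "\<dots> = 0 \<longleftrightarrow> (t^2+1)^2*(a^2*P*V - b^2*Q*U - (a^2-b^2)*U*V) = 0"
      using a b d by simp
    also have "\<dots> \<longleftrightarrow> 2*((b^2+(a^2-b^2)*Q^2)*t^3 + 3*(a^2-b^2)*P*Q*t^2 + (2*a^2-b^2-3*(a^2-b^2)*Q^2)*t + (-((a^2-b^2)*P*Q))) = 0"
      unfolding H_id2[OF circ hU hV] ..
    also have "\<dots> \<longleftrightarrow> (b^2+(a^2-b^2)*Q^2)*t^3 + 3*(a^2-b^2)*P*Q*t^2 + (2*a^2-b^2-3*(a^2-b^2)*Q^2)*t + (-((a^2-b^2)*P*Q)) = 0"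
      by (simp only: mult_eq_0_iff) simp
    also have "\<dots> \<longleftrightarrow> t \<in> R"
      unfolding R_def k_def by (simp add: mult.assoc)
    finally show ?thesis .
  qed
  have S: "{B \<in> ellipse a b. (p,q) \<in> normal_line a b B} = insert (p,q) (phi ` R)"
  proof (rule set_eqI)
    fix B show "B \<in> {B \<in> ellipse a b. (p,q) \<in> normal_line a b B} \<longleftrightarrow> B \<in> insert (p,q) (phi ` R)"
    proof
      assume "B \<in> {B \<in> ellipse a b. (p,q) \<in> normal_line a b B}"
      then have BE: "B \<in> ellipse a b" and Bn: "(p,q) \<in> normal_line a b B" by auto
      obtain x y where Bxy: "B = (x,y)" by (cases B)
      show "B \<in> insert (p,q) (phi ` R)"
      proof (cases "B = (p,q)")
        case True then show ?thesis by simp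
      next
        case False
        have uv: "(x/a)^2 + (y/b)^2 = 1" using BE unfolding Bxy ellipse_def by (simp add: power_divide)
        have ne: "(x/a, y/b) \<noteq> (P, Q)" using False a b unfolding Bxy P_def Q_def by auto
        obtain t where t: "x/a = UU P Q t" "y/b = VV P Q t" using UV_surj[OF circ uv ne] by blast
        have "B = phi t" unfolding Bxy phi_def using t a b by (simp add: field_simps)
        then show ?thesis using key[of t] Bn by auto
      qed
    next
      assume "B \<in> insert (p,q) (phi ` R)"
      then show "B \<in> {B \<in> ellipse a b. (p,q) \<in> normal_line a b B}"
      proof
        assume "B = (p,q)"
        then show ?thesis using A normal_iff[OF a b A, of p q] by simp
      next
        assume "B \<in> phi ` R"
        then show ?thesis using key phiE by auto
      qed
    qed
  qed
  have notin: "(p,q) \<notin> phi ` R"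
  proof
    assume "(p,q) \<in> phi ` R"
    then obtain t where "(p,q) = phi t" by auto
    then have e1: "p = a * UU P Q t" and e2: "q = b * VV P Q t" unfolding phi_def by auto
    have a0: "a \<noteq> 0" and b0: "b \<noteq> 0" using a b by auto
    have "UU P Q t = P" using div_eq_helper[OF a0 e1] by (simp add: P_def)
    moreover have "VV P Q t = Q" using div_eq_helper[OF b0 e2] by (simp add: Q_def)
    ultimately have "(UU P Q t, VV P Q t) = (P, Q)" by simp
    then show False using UV_neq[OF circ] by blast
  qed
  have inj: "inj phi"
  proof (rule injI)
    fix s t assume "phi s = phi t"
    then have "(UU P Q s, VV P Q s) = (UU P Q t, VV P Q t)" unfolding phi_def using a b by auto
    then show "s = t" using UV_inj[OF circ] by (auto dest: injD)
  qed
  have fin: "finite R" using cR card_ge_0_finite by blast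
  have "num_normals a b (p,q) = card (insert (p,q) (phi ` R))" unfolding num_normals_def S ..
  also have "\<dots> = Suc (card (phi ` R))" using notin fin by simp
  also have "card (phi ` R) = card R" using inj by (simp add: card_image inj_on_subset)
  finally show ?thesis .
qed

lemma components_cover:
  fixes S :: "'a::topological_space set" and U :: "nat \<Rightarrow> 'a set"
  assumes op: "\<And>i. i < n \<Longrightarrow> open (U i)" and cov: "S \<subseteq> (\<Union>i<n. U i)"
    and dis: "\<And>i j. i<n \<Longrightarrow> j<n \<Longrightarrow> i\<noteq>j \<Longrightarrow> U i \<inter> U j = {}"
    and con: "\<And>i. i<n \<Longrightarrow> connected (S \<inter> U i)" and ne: "\<And>i. i<n \<Longrightarrow> S \<inter> U i \<noteq> {}"
  shows "components S = (\<lambda>i. S \<inter> U i) ` {..<n}" and "card (components S) = n"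
proof -
  have sub: "C \<subseteq> U i" if C: "C \<in> components S" and i: "i<n" and x: "x \<in> C \<inter> U i" for C i x
  proof -
    let ?V = "\<Union>j\<in>{..<n}-{i}. U j"
    have oV: "open ?V" using op by auto
    have d: "U i \<inter> ?V \<inter> C = {}" using dis i by auto
    have cv: "C \<subseteq> U i \<union> ?V" using in_components_subset[OF C] cov by auto
    have "U i \<inter> C = {} \<or> ?V \<inter> C = {}"
      by (rule connectedD[OF in_components_connected[OF C] op[OF i] oV d cv])
    then show ?thesis using x cv by blast
  qed
  have eq: "C = S \<inter> U i" if C: "C \<in> components S" and i: "i<n" and x: "x \<in> C \<inter> U i" for C i x
  proof
    show "C \<subseteq> S \<inter> U i" using sub[OF C i x] in_components_subset[OF C] by blast
    have "C \<inter> (S \<inter> U i) \<noteq> {}" using x in_components_subset[OF C] by blast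
    then show "S \<inter> U i \<subseteq> C" using components_maximal[OF C con[OF i]] by blast
  qed
  show 1: "components S = (\<lambda>i. S \<inter> U i) ` {..<n}"
  proof
    show "components S \<subseteq> (\<lambda>i. S \<inter> U i) ` {..<n}"
    proof
      fix C assume C: "C \<in> components S"
      obtain x where "x \<in> C" using in_components_nonempty[OF C] by blast
      then have "x \<in> S" using in_components_subset[OF C] by blast
      then obtain i where i: "i<n" "x \<in> U i" using cov by blast
      then show "C \<in> (\<lambda>i. S \<inter> U i) ` {..<n}" using eq[OF C i(1), of x] \<open>x \<in> C\<close> by blast
    qed
    show "(\<lambda>i. S \<inter> U i) ` {..<n} \<subseteq> components S"
    proof
      fix C assume "C \<in> (\<lambda>i. S \<inter> U i) ` {..<n}"
      then obtain i where i: "i<n" and Ci: "C = S \<inter> U i" by blast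
      obtain x where x: "x \<in> S \<inter> U i" using ne[OF i] by blast
      have K: "connected_component_set S x \<in> components S" using x by (simp add: componentsI)
      have "x \<in> connected_component_set S x" using x by simp
      then have "connected_component_set S x = S \<inter> U i" using eq[OF K i, of x] x by blast
      then show "C \<in> components S" using K Ci by simp
    qed
  qed
  have "inj_on (\<lambda>i. S \<inter> U i) {..<n}"
  proof (rule inj_onI)
    fix i j assume i: "i \<in> {..<n}" and j: "j \<in> {..<n}" and e: "S \<inter> U i = S \<inter> U j"
    show "i = j"
    proof (rule ccontr)
      assume "i \<noteq> j"
      then have "S \<inter> U i = {}" using dis[of i j] i j e by auto
      then show False using ne i by auto
    qed
  qed
  then show "card (components S) = n" unfolding 1 by (simp add: card_image)
qed

lemma sqrt_of_sq_pos: "(y::real) > 0 \<Longrightarrow> b > 0 \<Longrightarrow> y^2 = b^2 * u \<Longrightarrow> y = b * sqrt u"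
proof -
  assume y: "y > 0" and b: "b > 0" and e: "y^2 = b^2 * u"
  have "u = (y/b)^2" using e b by (simp add: power_divide)
  then have "sqrt u = y/b" using y b by simp
  then show "y = b * sqrt u" using b by simp
qed

lemma arc_conn1:
  fixes a b h s :: real
  assumes a: "a>0" and b: "b>0" and h0: "0 \<le> h" and hb: "h < b" and s: "s^2 = 1"
  shows "connected {z. (fst z)^2/a^2 + (snd z)^2/b^2 = 1 \<and> s * snd z > h}"
proof -
  define m where "m = sqrt (a^2*(1-h^2/b^2))"
  define f where "f x = (x, s*(b * sqrt(1-x^2/a^2)))" for x
  have "h^2 < b^2" using h0 hb by (simp add: power_strict_mono)
  then have "h^2/b^2 < 1" using b by simp
  then have p: "0 \<le> 1-h^2/b^2" by linarith
  have p2: "0 \<le> a^2*(1-h^2/b^2)" using mult_nonneg_nonneg[OF zero_le_power2 p] .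
  have m0: "m \<ge> 0" unfolding m_def using p2 by simp
  have msq: "m^2 = a^2*(1-h^2/b^2)" unfolding m_def using real_sqrt_pow2[OF p2] .
  have ss: "s* s = 1" using s by (simp add: power2_eq_square)
  have "{z. (fst z)^2/a^2 + (snd z)^2/b^2 = 1 \<and> s * snd z > h} = f ` {-m<..<m}"
  proof (rule set_eqI)
    fix z :: "real \<times> real"
    obtain x y where z: "z = (x,y)" by (cases z)
    show "z \<in> {z. (fst z)^2/a^2 + (snd z)^2/b^2 = 1 \<and> s * snd z > h} \<longleftrightarrow> z \<in> f ` {-m<..<m}"
    proof
      assume "z \<in> {z. (fst z)^2/a^2 + (snd z)^2/b^2 = 1 \<and> s * snd z > h}"
      then have E: "x^2/a^2 + y^2/b^2 = 1" and yh: "s*y > h" unfolding z by auto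
      have ysq: "(s*y)^2 = b^2*(1-x^2/a^2)" using E b ss by (simp add: power_mult_distrib s field_simps)
      have "s*y > 0" using yh h0 by linarith
      then have sy: "s*y = b * sqrt(1-x^2/a^2)" using sqrt_of_sq_pos b ysq by blast
      have "y = s*(b * sqrt(1-x^2/a^2))" using sy ss by (metis mult.assoc mult_1)
      moreover have "x^2 < m^2"
      proof -
        have "h^2 < (s*y)^2" using yh h0 by (simp add: power_strict_mono)
        then have "h^2 < b^2*(1-x^2/a^2)" using ysq by simp
        then have "h^2/b^2 < 1 - x^2/a^2" using b by (simp add: field_simps)
        then have "x^2/a^2 < 1 - h^2/b^2" by simp
        then show ?thesis unfolding msq using a by (simp add: field_simps)
      qed
      then have "\<bar>x\<bar> < m" using m0 by (metis abs_of_nonneg abs_le_square_iff not_less)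
      ultimately show "z \<in> f ` {-m<..<m}" unfolding z f_def by (auto simp: abs_less_iff)
    next
      assume "z \<in> f ` {-m<..<m}"
      then obtain x where x: "-m < x" "x < m" and zf: "z = f x" by auto
      have "\<bar>x\<bar> < m" using x by simp
      then have "x^2 < m^2" using m0 by (metis abs_of_nonneg abs_le_square_iff not_less)
      then have "x^2/a^2 < 1 - h^2/b^2" unfolding msq using a by (simp add: field_simps)
      then have u: "h^2/b^2 < 1 - x^2/a^2" by simp
      have u0: "0 \<le> 1 - x^2/a^2" using u by (smt (verit) zero_le_divide_iff zero_le_power2)
      have "sqrt (h^2/b^2) < sqrt (1 - x^2/a^2)" using u by simp
      then have "h/b < sqrt (1 - x^2/a^2)" using h0 b by (simp add: real_sqrt_divide)
      then have hlt: "h < b * sqrt(1-x^2/a^2)" using b by (simp add: field_simps)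
      have e1: "s * (s*(b * sqrt(1-x^2/a^2))) = b * sqrt(1-x^2/a^2)" using ss by (metis mult.assoc mult_1)
      have e2: "x^2/a^2 + (s*(b * sqrt(1-x^2/a^2)))^2/b^2 = 1"
        using u0 b s by (simp add: power_mult_distrib)
      show "z \<in> {z. (fst z)^2/a^2 + (snd z)^2/b^2 = 1 \<and> s * snd z > h}"
        unfolding zf f_def mem_Collect_eq fst_conv snd_conv e1 using hlt e2 by blast
    qed
  qed
  moreover have "continuous_on {-m<..<m} f" unfolding f_def using a by (intro continuous_intros) auto
  ultimately show ?thesis by (metis connected_Ioo connected_continuous_image)
qed

lemma arc_conn2:
  fixes a b h s :: real
  assumes a: "a>0" and b: "b>0" and h0: "0 < h" and hb: "h \<le> b" and s: "s^2 = 1"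
  shows "connected {z. (fst z)^2/a^2 + (snd z)^2/b^2 = 1 \<and> s * fst z > 0 \<and> \<bar>snd z\<bar> < h}"
proof -
  define f where "f y = (s*(a * sqrt(1-y^2/b^2)), y)" for y
  have ss: "s* s = 1" using s by (simp add: power2_eq_square)
  have "{z. (fst z)^2/a^2 + (snd z)^2/b^2 = 1 \<and> s * fst z > 0 \<and> \<bar>snd z\<bar> < h} = f ` {-h<..<h}"
  proof (rule set_eqI)
    fix z :: "real \<times> real"
    obtain x y where z: "z = (x,y)" by (cases z)
    show "z \<in> {z. (fst z)^2/a^2 + (snd z)^2/b^2 = 1 \<and> s * fst z > 0 \<and> \<bar>snd z\<bar> < h} \<longleftrightarrow> z \<in> f ` {-h<..<h}"
    proof
      assume "z \<in> {z. (fst z)^2/a^2 + (snd z)^2/b^2 = 1 \<and> s * fst z > 0 \<and> \<bar>snd z\<bar> < h}"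
      then have E: "x^2/a^2 + y^2/b^2 = 1" and xp: "s*x > 0" and yh: "\<bar>y\<bar> < h" unfolding z by auto
      have xsq: "(s*x)^2 = a^2*(1-y^2/b^2)" using E a ss by (simp add: power_mult_distrib s field_simps)
      have sx: "s*x = a * sqrt(1-y^2/b^2)" using sqrt_of_sq_pos a xsq xp by blast
      have "x = s*(a * sqrt(1-y^2/b^2))" using sx ss by (metis mult.assoc mult_1)
      then show "z \<in> f ` {-h<..<h}" unfolding z f_def using yh by (auto simp: abs_less_iff)
    next
      assume "z \<in> f ` {-h<..<h}"
      then obtain y where y: "-h < y" "y < h" and zf: "z = f y" by auto
      have "\<bar>y\<bar> < b" using y hb by simp
      then have "y^2 < b^2" by (metis abs_le_square_iff abs_of_pos b not_less)
      then have u: "0 < 1 - y^2/b^2" using b by simp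
      have e1: "s * (s*(a * sqrt(1-y^2/b^2))) = a * sqrt(1-y^2/b^2)" using ss by (metis mult.assoc mult_1)
      have e2: "a * sqrt(1-y^2/b^2) > 0" using a u by simp
      have e3: "(s*(a * sqrt(1-y^2/b^2)))^2/a^2 + y^2/b^2 = 1"
        using u a s by (simp add: power_mult_distrib)
      have e4: "\<bar>y\<bar> < h" using y by simp
      show "z \<in> {z. (fst z)^2/a^2 + (snd z)^2/b^2 = 1 \<and> s * fst z > 0 \<and> \<bar>snd z\<bar> < h}"
        unfolding zf f_def mem_Collect_eq fst_conv snd_conv e1 using e2 e3 e4 by blast
    qed
  qed
  moreover have "continuous_on {-h<..<h} f" unfolding f_def using b by (intro continuous_intros) auto
  ultimately show ?thesis by (metis connected_Ioo connected_continuous_image)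
qed

lemma disc_id2:
  fixes P Q A B k al bb c d :: real
  assumes "P^2+Q^2=1" "k = A-B" "al = B + k*Q^2" "bb = 3*k*P*Q" "c = 2*A-B-3*k*Q^2" "d = -(k*P*Q)"
  shows "18*al*bb*c*d - 4*bb^3*d + bb^2*c^2 - 4*al*c^3 - 27*al^2*d^2 = 4*(k*(A+B)^3*Q^2 - B*(2*A-B)^3)"
  unfolding assms(2-6) using assms(1) by algebra

lemma n_values:
  fixes a b p q :: real
  assumes a: "a>0" and b: "b>0" and ab: "a > b" and A: "(p,q) \<in> ellipse a b"
  shows "(a^2-b^2)*(a^2+b^2)^3*(q/b)^2 > b^2*(2*a^2-b^2)^3 \<Longrightarrow> num_normals a b (p,q) = 4"
    and "(a^2-b^2)*(a^2+b^2)^3*(q/b)^2 < b^2*(2*a^2-b^2)^3 \<Longrightarrow> num_normals a b (p,q) = 2"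
    and "a^2 = 2*b^2 \<Longrightarrow> q^2 = b^2 \<Longrightarrow> num_normals a b (p,q) = 2"
proof -
  define P where "P = p/a"
  define Q where "Q = q/b"
  define k where "k = a^2-b^2"
  have circ: "P^2 + Q^2 = 1" using A unfolding ellipse_def P_def Q_def by (simp add: power_divide)
  have k0: "k > 0" unfolding k_def using a b ab by (simp add: power_strict_mono)
  define al where "al = b^2 + k*Q^2"
  have al0: "al > 0" unfolding al_def using b k0 by (simp add: add_pos_nonneg)
  define R where "R = {t. al*t^3 + (3*k*P*Q)*t^2 + (2*a^2-b^2-3*k*Q^2)*t + (-(k*P*Q)) = 0}"
  have cnt: "card R > 0 \<Longrightarrow> num_normals a b (p,q) = Suc (card R)"
    using count_normals[OF a b A] unfolding R_def al_def k_def P_def Q_def by simp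
  obtain r where r: "al*r^3 + (3*k*P*Q)*r^2 + (2*a^2-b^2-3*k*Q^2)*r + (-(k*P*Q)) = 0"
    using cubic_root_exists[OF al0] by blast
  have D: "18*al*(3*k*P*Q)*(2*a^2-b^2-3*k*Q^2)*(-(k*P*Q)) - 4*(3*k*P*Q)^3*(-(k*P*Q))
      + (3*k*P*Q)^2*(2*a^2-b^2-3*k*Q^2)^2 - 4*al*(2*a^2-b^2-3*k*Q^2)^3 - 27*al^2*(-(k*P*Q))^2
      = 4*(k*(a^2+b^2)^3*Q^2 - b^2*(2*a^2-b^2)^3)"
    by (rule disc_id2[OF circ k_def al_def]) simp_all
  show "(a^2-b^2)*(a^2+b^2)^3*(q/b)^2 > b^2*(2*a^2-b^2)^3 \<Longrightarrow> num_normals a b (p,q) = 4"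
  proof -
    assume h: "(a^2-b^2)*(a^2+b^2)^3*(q/b)^2 > b^2*(2*a^2-b^2)^3"
    have "card R = 3" unfolding R_def
      by (rule cubic_count(2)[OF al0 r]) (unfold D, use h in \<open>simp add: k_def Q_def\<close>)
    then show ?thesis using cnt by simp
  qed
  show "(a^2-b^2)*(a^2+b^2)^3*(q/b)^2 < b^2*(2*a^2-b^2)^3 \<Longrightarrow> num_normals a b (p,q) = 2"
  proof -
    assume h: "(a^2-b^2)*(a^2+b^2)^3*(q/b)^2 < b^2*(2*a^2-b^2)^3"
    have "card R = 1" unfolding R_def
      by (rule cubic_count(1)[OF al0 r]) (unfold D, use h in \<open>simp add: k_def Q_def\<close>)
    then show ?thesis using cnt by simp
  qed
  show "a^2 = 2*b^2 \<Longrightarrow> q^2 = b^2 \<Longrightarrow> num_normals a b (p,q) = 2"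
  proof -
    assume h1: "a^2 = 2*b^2" and h2: "q^2 = b^2"
    have Q2: "Q^2 = 1" unfolding Q_def using h2 b by (simp add: power_divide)
    then have P0: "P = 0" using circ by simp
    have kk: "k = b^2" unfolding k_def using h1 by simp
    have "R = {0}"
    proof (rule set_eqI)
      fix t
      have e: "al*t^3 + (3*k*P*Q)*t^2 + (2*a^2-b^2-3*k*Q^2)*t + (-(k*P*Q)) = (2*b^2)*t^3"
        unfolding al_def P0 Q2 kk h1 by simp
      have "t \<in> R \<longleftrightarrow> (2*b^2)*t^3 = 0" unfolding R_def mem_Collect_eq e ..
      then show "t \<in> R \<longleftrightarrow> t \<in> {0}" using b by simp
    qed
    then show ?thesis using cnt by simp
  qed
qed

lemma ell_mem: "z \<in> ellipse a b \<longleftrightarrow> (fst z)^2/a^2 + (snd z)^2/b^2 = 1"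
  by (cases z) (simp add: ellipse_def)

lemma sq_gt_pos: "(y0::real) > 0 \<Longrightarrow> \<bar>y\<bar> > y0 \<Longrightarrow> y^2 > y0^2"
  by (metis abs_of_pos abs_le_square_iff not_less)

lemma sq_lt_pos: "(y0::real) > 0 \<Longrightarrow> \<bar>y\<bar> < y0 \<Longrightarrow> y^2 < y0^2"
  by (metis abs_of_pos abs_le_square_iff not_less)

theorem theorem1:
  fixes a b :: real
  assumes "a > b" and "b > 0"
  defines "x0 \<equiv> sqrt (a^4 * (a\<^sup>2 - 2 * b\<^sup>2)^3 / ((a\<^sup>2 - b\<^sup>2) * (a\<^sup>2 + b\<^sup>2)^3))"
      and "y0 \<equiv> sqrt (b^4 * (2 * a\<^sup>2 - b\<^sup>2)^3 / ((a\<^sup>2 - b\<^sup>2) * (a\<^sup>2 + b\<^sup>2)^3))"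
  defines "P \<equiv> {(x0, y0), (-x0, y0), (x0, -y0), (-x0, -y0)}"
  shows "(a\<^sup>2 > 2 * b\<^sup>2 \<longrightarrow>
            P \<subseteq> ellipse a b
          \<and> card (components (ellipse a b - P)) = 4
          \<and> (\<forall>C \<in> components (ellipse a b - P).
               (\<forall>A \<in> C. num_normals a b A = 4) \<or> (\<forall>A \<in> C. num_normals a b A = 2))
          \<and> (\<exists>C \<in> components (ellipse a b - P). \<forall>A \<in> C. num_normals a b A = 4)
          \<and> (\<exists>C \<in> components (ellipse a b - P). \<forall>A \<in> C. num_normals a b A = 2))
       \<and> (a\<^sup>2 \<le> 2 * b\<^sup>2 \<longrightarrow> (\<forall>A \<in> ellipse a b. num_normals a b A = 2))"
proof -
  have b0: "b > 0" and a0: "a > 0" and ab: "a > b" using assms by auto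
  define k where "k = a^2-b^2"
  define m where "m = a^2+b^2"
  have k0: "k > 0" unfolding k_def using a0 b0 ab by (simp add: power_strict_mono)
  have m0: "m > 0" unfolding m_def using a0 b0 by (simp add: add_pos_pos)
  have km0: "k*m^3 > 0" using k0 m0 by simp
  have ident: "a^2*(a^2-2*b^2)^3 + b^2*(2*a^2-b^2)^3 = k*m^3"
    unfolding k_def m_def by (simp add: algebra_simps power2_eq_square power3_eq_cube)
  have ab2: "a^2 > b^2" using ab b0 by (simp add: power_strict_mono)
  have a2p: "a^2 > 0" using a0 by simp
  have c2: "2*a^2-b^2 > 0" using ab2 a2p by linarith
  have y0arg: "b^4*(2*a^2-b^2)^3/(k*m^3) > 0" using b0 c2 km0 by simp
  have y0sq: "y0^2 = b^4*(2*a^2-b^2)^3/(k*m^3)"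
    unfolding y0_def k_def m_def using y0arg unfolding k_def m_def by simp
  have y0pos: "y0 > 0" unfolding y0_def using y0arg unfolding k_def m_def by simp
  have lin: "k*m^3*(q/b)^2 - b^2*(2*a^2-b^2)^3 = (k*m^3/b^2)*(q^2 - y0^2)" for q
    unfolding y0sq using b0 km0 k0 m0 by (simp add: field_simps power_divide)
  have c0: "k*m^3/b^2 > 0" using km0 b0 by simp
  have n4: "num_normals a b z = 4" if z: "z \<in> ellipse a b" and h: "(snd z)^2 > y0^2" for z
  proof -
    have "k*m^3*(snd z/b)^2 - b^2*(2*a^2-b^2)^3 > 0" unfolding lin by (rule mult_pos_pos[OF c0]) (use h in simp)
    then have "(a^2-b^2)*(a^2+b^2)^3*(snd z/b)^2 > b^2*(2*a^2-b^2)^3" unfolding k_def m_def by simp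
    moreover have "(fst z, snd z) \<in> ellipse a b" using z by simp
    ultimately show ?thesis using n_values(1)[OF a0 b0 ab, of "fst z" "snd z"] by simp
  qed
  have n2: "num_normals a b z = 2" if z: "z \<in> ellipse a b" and h: "(snd z)^2 < y0^2" for z
  proof -
    have "k*m^3*(snd z/b)^2 - b^2*(2*a^2-b^2)^3 < 0" unfolding lin by (rule mult_pos_neg[OF c0]) (use h in simp)
    then have "(a^2-b^2)*(a^2+b^2)^3*(snd z/b)^2 < b^2*(2*a^2-b^2)^3" unfolding k_def m_def by simp
    moreover have "(fst z, snd z) \<in> ellipse a b" using z by simp
    ultimately show ?thesis using n_values(2)[OF a0 b0 ab, of "fst z" "snd z"] by simp
  qed
  have part2: "a^2 \<le> 2*b^2 \<longrightarrow> (\<forall>A \<in> ellipse a b. num_normals a b A = 2)"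
  proof (intro impI ballI)
    fix z assume h: "a^2 \<le> 2*b^2" and z: "z \<in> ellipse a b"
    have E: "(fst z)^2/a^2 + (snd z)^2/b^2 = 1" using z ell_mem by blast
    have "(snd z/b)^2 = 1 - (fst z)^2/a^2" using E by (simp add: power_divide)
    moreover have "(fst z)^2/a^2 \<ge> 0" by simp
    ultimately have w1: "(snd z/b)^2 \<le> 1" by linarith
    have c3: "(a^2-2*b^2)^3 \<le> 0"
    proof -
      have "a^2-2*b^2 \<le> 0" using h by simp
      moreover have "(a^2-2*b^2)^3 = (a^2-2*b^2)*(a^2-2*b^2)^2" by (simp add: power3_eq_cube power2_eq_square)
      ultimately show ?thesis using mult_nonpos_nonneg[of "a^2-2*b^2" "(a^2-2*b^2)^2"] by simp
    qed
    have t1: "k*m^3*(snd z/b)^2 \<le> k*m^3" using w1 km0 by (simp add: mult_left_le)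
    have t2: "a^2*(a^2-2*b^2)^3 \<le> 0" using c3 by (simp add: mult_nonneg_nonpos)
    show "num_normals a b z = 2"
    proof (cases "k*m^3*(snd z/b)^2 < b^2*(2*a^2-b^2)^3")
      case True
      then have "(a^2-b^2)*(a^2+b^2)^3*(snd z/b)^2 < b^2*(2*a^2-b^2)^3" unfolding k_def m_def by simp
      moreover have "(fst z, snd z) \<in> ellipse a b" using z by simp
      ultimately show ?thesis using n_values(2)[OF a0 b0 ab, of "fst z" "snd z"] by simp
    next
      case False
      then have eq1: "k*m^3*(snd z/b)^2 = k*m^3" and eq2: "a^2*(a^2-2*b^2)^3 = 0"
        using t1 t2 ident by linarith+
      have "(snd z/b)^2 = 1" using eq1 k0 m0 by simp
      then have q2: "(snd z)^2 = b^2" using b0 by (simp add: power_divide)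
      have "(a^2-2*b^2)^3 = 0" using eq2 a0 by simp
      then have a2: "a^2 = 2*b^2" by simp
      have "(fst z, snd z) \<in> ellipse a b" using z by simp
      then show ?thesis using n_values(3)[OF a0 b0 ab, of "fst z" "snd z"] a2 q2 by simp
    qed
  qed
  have part1: "a^2 > 2*b^2 \<longrightarrow>
            P \<subseteq> ellipse a b
          \<and> card (components (ellipse a b - P)) = 4
          \<and> (\<forall>C \<in> components (ellipse a b - P).
               (\<forall>A \<in> C. num_normals a b A = 4) \<or> (\<forall>A \<in> C. num_normals a b A = 2))
          \<and> (\<exists>C \<in> components (ellipse a b - P). \<forall>A \<in> C. num_normals a b A = 4)
          \<and> (\<exists>C \<in> components (ellipse a b - P). \<forall>A \<in> C. num_normals a b A = 2)"
  proof (intro impI)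
    assume h: "a^2 > 2*b^2"
    have c1: "a^2 - 2*b^2 > 0" using h by simp
    have x0arg: "a^4*(a^2-2*b^2)^3/(k*m^3) > 0" using a0 c1 km0 by simp
    have x0sq: "x0^2 = a^4*(a^2-2*b^2)^3/(k*m^3)"
      unfolding x0_def k_def m_def using x0arg unfolding k_def m_def by simp
    have x0pos: "x0 > 0" unfolding x0_def using x0arg unfolding k_def m_def by simp
    have xa: "x0^2/a^2 = a^2*(a^2-2*b^2)^3/(k*m^3)" unfolding x0sq using a0 k0 m0 by (simp add: field_simps power2_eq_square eval_nat_numeral)
    have yb: "y0^2/b^2 = b^2*(2*a^2-b^2)^3/(k*m^3)" unfolding y0sq using b0 k0 m0 by (simp add: field_simps power2_eq_square eval_nat_numeral)
    have sumid: "x0^2/a^2 + y0^2/b^2 = 1"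
      unfolding xa yb add_divide_distrib[symmetric] ident using k0 m0 by simp
    have "x0^2/a^2 > 0" using x0pos a0 by simp
    then have "y0^2/b^2 < 1" using sumid by linarith
    then have "y0^2 < b^2" using b0 by simp
    then have y0b: "y0 < b" using y0pos b0 by (metis abs_of_pos abs_le_square_iff not_less)
    have PE: "P \<subseteq> ellipse a b" unfolding P_def ellipse_def using sumid by auto
    have Pchar: "z \<in> P \<longleftrightarrow> \<bar>snd z\<bar> = y0" if z: "z \<in> ellipse a b" for z
    proof
      assume "z \<in> P" then show "\<bar>snd z\<bar> = y0" unfolding P_def using y0pos by auto
    next
      assume hz: "\<bar>snd z\<bar> = y0"
      have E: "(fst z)^2/a^2 + (snd z)^2/b^2 = 1" using z ell_mem by blast
      have "(snd z)^2 = y0^2" using hz by (metis power2_abs)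
      then have f1: "(fst z)^2/a^2 = 1 - y0^2/b^2" using E by simp
      have f2: "x0^2/a^2 = 1 - y0^2/b^2" using sumid by simp
      have "(fst z)^2/a^2 = x0^2/a^2" using f1 f2 by simp
      then have "(fst z)^2 = x0^2" using a0 by simp
      then have "fst z = x0 \<or> fst z = -x0" by (simp add: power2_eq_iff)
      moreover have "snd z = y0 \<or> snd z = -y0" using hz by auto
      ultimately show "z \<in> P" unfolding P_def by (cases z) auto
    qed
    define S where "S = ellipse a b - P"
    define U where "U i = (if i = (0::nat) then {z::real\<times>real. snd z > y0}
        else if i = 1 then {z. snd z < -y0}
        else if i = 2 then {z. fst z > 0 \<and> \<bar>snd z\<bar> < y0}
        else {z. fst z < 0 \<and> \<bar>snd z\<bar> < y0})" for i
    have U0: "U 0 = {z. snd z > y0}" and U1: "U 1 = {z. snd z < -y0}"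
      and U2: "U 2 = {z. fst z > 0 \<and> \<bar>snd z\<bar> < y0}" and U3: "U 3 = {z. fst z < 0 \<and> \<bar>snd z\<bar> < y0}"
      unfolding U_def by simp_all
    have i4: "i < 4 \<Longrightarrow> i = 0 \<or> i = 1 \<or> i = 2 \<or> i = (3::nat)" for i by auto
    have SE: "z \<in> S \<longleftrightarrow> (fst z)^2/a^2 + (snd z)^2/b^2 = 1 \<and> \<bar>snd z\<bar> \<noteq> y0" for z
      unfolding S_def using Pchar ell_mem by blast
    have S0: "S \<inter> U 0 = {z. (fst z)^2/a^2 + (snd z)^2/b^2 = 1 \<and> 1 * snd z > y0}"
      unfolding U0 using SE y0pos by auto
    have S1: "S \<inter> U 1 = {z. (fst z)^2/a^2 + (snd z)^2/b^2 = 1 \<and> (-1) * snd z > y0}"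
      unfolding U1 using SE y0pos by auto
    have S2: "S \<inter> U 2 = {z. (fst z)^2/a^2 + (snd z)^2/b^2 = 1 \<and> 1 * fst z > 0 \<and> \<bar>snd z\<bar> < y0}"
      unfolding U2 using SE by auto
    have S3: "S \<inter> U 3 = {z. (fst z)^2/a^2 + (snd z)^2/b^2 = 1 \<and> (-1) * fst z > 0 \<and> \<bar>snd z\<bar> < y0}"
      unfolding U3 using SE by auto
    have opn: "open (U i)" if "i < 4" for i
    proof -
      have "open {z::real\<times>real. y0 < snd z}" by (intro open_Collect_less continuous_intros)
      moreover have "open {z::real\<times>real. snd z < -y0}" by (intro open_Collect_less continuous_intros)
      moreover have "open {z::real\<times>real. fst z > 0 \<and> \<bar>snd z\<bar> < y0}"
        by (intro open_Collect_conj open_Collect_less continuous_intros)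
      moreover have "open {z::real\<times>real. fst z < 0 \<and> \<bar>snd z\<bar> < y0}"
        by (intro open_Collect_conj open_Collect_less continuous_intros)
      ultimately show ?thesis using i4[OF that] U0 U1 U2 U3 by auto
    qed
    have cov: "S \<subseteq> (\<Union>i<4. U i)"
    proof
      fix z assume z: "z \<in> S"
      then have E: "(fst z)^2/a^2 + (snd z)^2/b^2 = 1" and ne: "\<bar>snd z\<bar> \<noteq> y0" using SE by auto
      show "z \<in> (\<Union>i<4. U i)"
      proof (cases "snd z > y0 \<or> snd z < -y0")
        case True
        then have "z \<in> U 0 \<or> z \<in> U 1" unfolding U0 U1 by auto
        then show ?thesis by (metis UN_iff lessThan_iff zero_less_numeral one_less_numeral_iff semiring_norm(76))
      next
        case False
        then have ys: "\<bar>snd z\<bar> < y0" using ne by auto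
        have "fst z \<noteq> 0"
        proof
          assume "fst z = 0"
          then have "(fst z)^2/a^2 = 0" by simp
          then have e0: "(snd z)^2/b^2 = 1" using E by linarith
          have "(snd z)^2 = ((snd z)^2/b^2) * b^2" using b0 by simp
          then have "(snd z)^2 = b^2" unfolding e0 by simp
          then have "\<bar>snd z\<bar> = b" using b0 by (metis abs_of_pos power2_abs power2_eq_iff_nonneg abs_ge_zero less_imp_le)
          then show False using ys y0b by simp
        qed
        then have "z \<in> U 2 \<or> z \<in> U 3" unfolding U2 U3 using ys by auto
        moreover have "(2::nat) < 4" "(3::nat) < 4" by simp_all
        ultimately show ?thesis by blast
      qed
    qed
    have dis: "U i \<inter> U j = {}" if "i < 4" "j < 4" "i \<noteq> j" for i j
      using i4[OF that(1)] i4[OF that(2)] that(3) U0 U1 U2 U3 y0pos by auto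
    have con: "connected (S \<inter> U i)" if "i < 4" for i
    proof -
      have "connected (S \<inter> U 0)" unfolding S0 by (rule arc_conn1[OF a0 b0 less_imp_le[OF y0pos] y0b]) simp
      moreover have "connected (S \<inter> U 1)" unfolding S1 by (rule arc_conn1[OF a0 b0 less_imp_le[OF y0pos] y0b]) simp
      moreover have "connected (S \<inter> U 2)" unfolding S2 by (rule arc_conn2[OF a0 b0 y0pos less_imp_le[OF y0b]]) simp
      moreover have "connected (S \<inter> U 3)" unfolding S3 by (rule arc_conn2[OF a0 b0 y0pos less_imp_le[OF y0b]]) simp
      ultimately show ?thesis using i4[OF that] by auto
    qed
    have nonemp: "S \<inter> U i \<noteq> {}" if "i < 4" for i
    proof -
      have "(0, b) \<in> S \<inter> U 0" unfolding S0 using b0 y0b by simp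
      moreover have "(0, -b) \<in> S \<inter> U 1" unfolding S1 using b0 y0b by simp
      moreover have "(a, 0) \<in> S \<inter> U 2" unfolding S2 using a0 y0pos by simp
      moreover have "(-a, 0) \<in> S \<inter> U 3" unfolding S3 using a0 y0pos by simp
      ultimately show ?thesis using i4[OF that] by auto
    qed
    have comps: "components S = (\<lambda>i. S \<inter> U i) ` {..<4}" and card4: "card (components S) = 4"
      using components_cover[of 4 U S, OF opn cov dis con nonemp] by auto
    have val: "(\<forall>A \<in> S \<inter> U i. num_normals a b A = 4) \<or> (\<forall>A \<in> S \<inter> U i. num_normals a b A = 2)"
      if "i < 4" for i
    proof -
      have "\<forall>A \<in> S \<inter> U 0. num_normals a b A = 4"
      proof
        fix z assume z: "z \<in> S \<inter> U 0"
        then have "z \<in> ellipse a b" "snd z > y0" unfolding S_def U0 by auto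
        then show "num_normals a b z = 4" using n4 sq_gt_pos[OF y0pos, of "snd z"] by simp
      qed
      moreover have "\<forall>A \<in> S \<inter> U 1. num_normals a b A = 4"
      proof
        fix z assume z: "z \<in> S \<inter> U 1"
        then have "z \<in> ellipse a b" "snd z < -y0" unfolding S_def U1 by auto
        then show "num_normals a b z = 4" using n4 sq_gt_pos[OF y0pos, of "snd z"] by simp
      qed
      moreover have "\<forall>A \<in> S \<inter> U 2. num_normals a b A = 2"
      proof
        fix z assume z: "z \<in> S \<inter> U 2"
        then have "z \<in> ellipse a b" "\<bar>snd z\<bar> < y0" unfolding S_def U2 by auto
        then show "num_normals a b z = 2" using n2 sq_lt_pos[OF y0pos, of "snd z"] by simp
      qed
      moreover have "\<forall>A \<in> S \<inter> U 3. num_normals a b A = 2"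
      proof
        fix z assume z: "z \<in> S \<inter> U 3"
        then have "z \<in> ellipse a b" "\<bar>snd z\<bar> < y0" unfolding S_def U3 by auto
        then show "num_normals a b z = 2" using n2 sq_lt_pos[OF y0pos, of "snd z"] by simp
      qed
      ultimately show ?thesis using i4[OF that] by auto
    qed
    have ex4: "\<exists>C \<in> components S. \<forall>A \<in> C. num_normals a b A = 4"
    proof
      show "S \<inter> U 0 \<in> components S" unfolding comps by simp
      show "\<forall>A \<in> S \<inter> U 0. num_normals a b A = 4"
      proof
        fix z assume z: "z \<in> S \<inter> U 0"
        then have "z \<in> ellipse a b" "snd z > y0" unfolding S_def U0 by auto
        then show "num_normals a b z = 4" using n4 sq_gt_pos[OF y0pos, of "snd z"] by simp
      qed
    qed
    have ex2: "\<exists>C \<in> components S. \<forall>A \<in> C. num_normals a b A = 2"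
    proof
      show "S \<inter> U 2 \<in> components S" unfolding comps by simp
      show "\<forall>A \<in> S \<inter> U 2. num_normals a b A = 2"
      proof
        fix z assume z: "z \<in> S \<inter> U 2"
        then have "z \<in> ellipse a b" "\<bar>snd z\<bar> < y0" unfolding S_def U2 by auto
        then show "num_normals a b z = 2" using n2 sq_lt_pos[OF y0pos, of "snd z"] by simp
      qed
    qed
    have allC: "\<forall>C \<in> components S. (\<forall>A \<in> C. num_normals a b A = 4) \<or> (\<forall>A \<in> C. num_normals a b A = 2)"
      unfolding comps using val by auto
    show "P \<subseteq> ellipse a b
          \<and> card (components (ellipse a b - P)) = 4
          \<and> (\<forall>C \<in> components (ellipse a b - P).
               (\<forall>A \<in> C. num_normals a b A = 4) \<or> (\<forall>A \<in> C. num_normals a b A = 2))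
          \<and> (\<exists>C \<in> components (ellipse a b - P). \<forall>A \<in> C. num_normals a b A = 4)
          \<and> (\<exists>C \<in> components (ellipse a b - P). \<forall>A \<in> C. num_normals a b A = 2)"
      using PE card4 allC ex4 ex2 unfolding S_def by blast
  qed
  show ?thesis using part1 part2 by blast
qed

end
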